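(* Let $S\subseteq\mathbb{R}^d$ be compact with $0\notin S$, let $R$ be positive homogeneous, and let $0<m\le M$ satisfy $m\le R(\eta)\le M$ for all $\eta\in S$. Let $\mathcal U$ be an open neighborhood of $0$ and $\widetilde R\in C^1(\mathcal U;\mathbb{R})$. Let $E\in\mathrm{End}(\mathbb{R}^d)$ with $\{r^E\}$ contracting, $\mu=\mathrm{tr}E$, $F=E/\mu$, and set $g_{n,\eta}(\theta)=\exp\big(-nR(n^{-E}\theta^F\eta)-n\widetilde R(n^{-E}\theta^F\eta)\big)$ for $n\in\mathbb{N}_+$, $\eta\in S$, $\theta>0$ with $n^{-E}\theta^F\eta\in\mathcal U$. If for some $\kappa>0$, $R$ is homogeneous with respect to $E/\kappa$ and $\widetilde R$ is strongly subhomogeneous with respect to $E/\kappa$ of order $1$, then for every $\beta>1$ there is $\delta>0$ such that $\|g_{n,\eta}\|_{L^\infty[\theta_1,\theta_2]}+\|\partial_\theta g_{n,\eta}\|_{L^1[\theta_1,\theta_2]}\le 1+\beta M/m$ for all $n\in\mathbb{N}_+$, $\eta\in S$, and $0<\theta_1\le\theta_2\le(n\delta)^\mu$.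
   Context: For $E\in\mathrm{End}(\mathbb{R}^d)$, $t>0$, $t^E:=\exp(\log(t)E)$; $\{t^E\}$ is contracting if $\lim_{t\to0}\|t^E\|=0$. $P$ homogeneous w.r.t. $E$: $P(t^E\xi)=tP(\xi)$; $\mathrm{Exp}(P)$ = set of such $E$. Positive homogeneous: real, continuous, positive definite ($\ge0$, zero only at $0$), $\mathrm{Exp}(P)\ne\emptyset$, $\{P=1\}$ compact. For $E$ with $\{t^E\}$ contracting, $\widetilde R\in C^l$ near $0$ is strongly subhomogeneous w.r.t. $E$ of order $l$ if for each $\epsilon>0$ and compact $K$ there is $\tau>0$ with $|t^k\partial_t^k\widetilde R(t^E\xi)|\le\epsilon t$ for all $k\le l$, $0<t<\tau$, $\xi\in K$. *)

theory Defs
  imports "HOL-Analysis.Analysis"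
begin

(* t^E := exp(log t E), the exponential series of the endomorphism (log t) E applied to x *)
definition texp :: "real \<Rightarrow> ('a::euclidean_space \<Rightarrow>\<^sub>L 'a) \<Rightarrow> 'a \<Rightarrow> 'a" where
  "texp t E x = (\<Sum>k. ((ln t) ^ k / fact k) *\<^sub>R ((blinfun_apply E ^^ k) x))"

definition tr :: "('a::euclidean_space \<Rightarrow>\<^sub>L 'a) \<Rightarrow> real" where
  "tr E = (\<Sum>b\<in>Basis. inner (blinfun_apply E b) b)"

definition contracting :: "('a::euclidean_space \<Rightarrow>\<^sub>L 'a) \<Rightarrow> bool" where
  "contracting E \<longleftrightarrow> ((\<lambda>t. onorm (texp t E)) \<longlongrightarrow> 0) (at_right 0)"

definition homogeneous :: "('a::euclidean_space \<Rightarrow> real) \<Rightarrow> ('a \<Rightarrow>\<^sub>L 'a) \<Rightarrow> bool" where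
  "homogeneous P E \<longleftrightarrow> (\<forall>t>0. \<forall>\<xi>. P (texp t E \<xi>) = t * P \<xi>)"

definition Exps :: "('a::euclidean_space \<Rightarrow> real) \<Rightarrow> ('a \<Rightarrow>\<^sub>L 'a) set" where
  "Exps P = {E. homogeneous P E}"

definition positive_homogeneous :: "('a::euclidean_space \<Rightarrow> real) \<Rightarrow> bool" where
  "positive_homogeneous P \<longleftrightarrow>
     continuous_on UNIV P \<and> (\<forall>\<xi>. P \<xi> \<ge> 0) \<and> (\<forall>\<xi>. P \<xi> = 0 \<longleftrightarrow> \<xi> = 0) \<and>
     Exps P \<noteq> {} \<and> compact {\<xi>. P \<xi> = 1}"

definition C1_on :: "'a::euclidean_space set \<Rightarrow> ('a \<Rightarrow> real) \<Rightarrow> bool" where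
  "C1_on U f \<longleftrightarrow> (\<exists>f'::'a \<Rightarrow> ('a \<Rightarrow>\<^sub>L real).
      (\<forall>x\<in>U. (f has_derivative blinfun_apply (f' x)) (at x)) \<and> continuous_on U f')"

definition strongly_subhomogeneous_1 :: "('a::euclidean_space \<Rightarrow>\<^sub>L 'a) \<Rightarrow> ('a \<Rightarrow> real) \<Rightarrow> bool" where
  "strongly_subhomogeneous_1 E Rt \<longleftrightarrow>
     contracting E \<and> (\<exists>V. open V \<and> 0 \<in> V \<and> C1_on V Rt) \<and>
     (\<forall>\<epsilon>>0. \<forall>K. compact K \<longrightarrow> (\<exists>\<tau>>0. \<forall>t. 0 < t \<and> t < \<tau> \<longrightarrow> (\<forall>\<xi>\<in>K.
        \<bar>Rt (texp t E \<xi>)\<bar> \<le> \<epsilon> * t \<and>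
        \<bar>t * deriv (\<lambda>s. Rt (texp s E \<xi>)) t\<bar> \<le> \<epsilon> * t)))"

end

theory Submission
  imports Defs Jordan_Normal_Form.Schur_Decomposition
begin


typedef (overloaded) 'a endo = "UNIV :: ('a::euclidean_space \<Rightarrow>\<^sub>L 'a) set" morphisms erep Endo by simp

setup_lifting type_definition_endo

instantiation endo :: (euclidean_space) real_vector
begin
lift_definition zero_endo :: "'a endo" is 0 .
lift_definition plus_endo :: "'a endo \<Rightarrow> 'a endo \<Rightarrow> 'a endo" is "(+)" .
lift_definition minus_endo :: "'a endo \<Rightarrow> 'a endo \<Rightarrow> 'a endo" is "(-)" .
lift_definition uminus_endo :: "'a endo \<Rightarrow> 'a endo" is uminus .
lift_definition scaleR_endo :: "real \<Rightarrow> 'a endo \<Rightarrow> 'a endo" is scaleR .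
instance by standard (transfer; simp add: algebra_simps scaleR_add_right scaleR_add_left)+
end

instantiation endo :: (euclidean_space) real_normed_vector
begin
lift_definition norm_endo :: "'a endo \<Rightarrow> real" is norm .
definition dist_endo :: "'a endo \<Rightarrow> 'a endo \<Rightarrow> real" where "dist_endo x y = norm (x - y)"
definition sgn_endo :: "'a endo \<Rightarrow> 'a endo" where "sgn_endo x = x /\<^sub>R norm x"
definition uniformity_endo :: "('a endo \<times> 'a endo) filter" where
  "uniformity_endo = (INF e\<in>{0 <..}. principal {(x, y). dist x y < e})"
definition open_endo :: "'a endo set \<Rightarrow> bool" where
  "open_endo U \<longleftrightarrow> (\<forall>x\<in>U. eventually (\<lambda>(x', y). x' = x \<longrightarrow> y \<in> U) uniformity)"
instance
  apply standard
  apply (simp_all add: dist_endo_def sgn_endo_def uniformity_endo_def open_endo_def)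
  apply (transfer, simp add: norm_triangle_ineq)+
  done
end

instantiation endo :: (euclidean_space) real_normed_algebra_1
begin
lift_definition one_endo :: "'a endo" is id_blinfun .
lift_definition times_endo :: "'a endo \<Rightarrow> 'a endo \<Rightarrow> 'a endo" is blinfun_compose .
instance
proof
  fix a b c :: "'a endo" and r :: real
  show "a * b * c = a * (b * c)" by transfer (rule blinfun_eqI, simp)
  show "(a + b) * c = a * c + b * c" by transfer (rule blinfun_eqI, simp add: blinfun.bilinear_simps)
  show "a * (b + c) = a * b + a * c" by transfer (rule blinfun_eqI, simp add: blinfun.bilinear_simps)
  show "1 * a = a" by transfer (rule blinfun_eqI, simp)
  show "a * 1 = a" by transfer (rule blinfun_eqI, simp)
  show "(0::'a endo) \<noteq> 1"
  proof transfer
    obtain b :: 'a where "b \<in> Basis" using nonempty_Basis by blast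
    then have "b \<noteq> 0" by auto
    then show "0 \<noteq> (id_blinfun :: 'a \<Rightarrow>\<^sub>L 'a)"
      by (metis blinfun.zero_left blinfun_apply_id_blinfun)
  qed
  show "r *\<^sub>R a * b = r *\<^sub>R (a * b)" by transfer (rule blinfun_eqI, simp add: blinfun.bilinear_simps)
  show "a * r *\<^sub>R b = r *\<^sub>R (a * b)" by transfer (rule blinfun_eqI, simp add: blinfun.bilinear_simps)
  show "norm (a * b) \<le> norm a * norm b" by transfer (rule norm_blinfun_compose)
  show "norm (1::'a endo) = 1" by transfer simp
qed
end


lemma dist_endo_rep: "dist x y = dist (erep x) (erep y)"
  unfolding dist_endo_def dist_norm by transfer simp

instance endo :: (euclidean_space) banach
proof
  fix X :: "nat \<Rightarrow> 'a endo"
  assume "Cauchy X"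
  then have "Cauchy (\<lambda>n. erep (X n))" unfolding Cauchy_def dist_endo_rep .
  then obtain L where L: "(\<lambda>n. erep (X n)) \<longlonglongrightarrow> L" using convergent_def Cauchy_convergent_iff by blast
  have "X \<longlonglongrightarrow> Endo L"
    using L unfolding lim_sequentially dist_endo_rep by (simp add: Endo_inverse)
  then show "convergent X" unfolding convergent_def by blast
qed

lemma erep_mult: "erep (a * b) = erep a o\<^sub>L erep b" by transfer simp
lemma erep_one: "erep 1 = id_blinfun" by transfer simp
lemma erep_scaleR: "erep (r *\<^sub>R a) = r *\<^sub>R erep a" by transfer simp
lemma erep_power: "blinfun_apply (erep (a ^ k)) x = (blinfun_apply (erep a) ^^ k) x"
  by (induction k arbitrary: x) (simp_all add: erep_mult erep_one)

lemma bl_eval: "bounded_linear (\<lambda>A::'a::euclidean_space endo. blinfun_apply (erep A) x)"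
proof -
  have "bounded_linear (\<lambda>A::'a endo. erep A)"
    apply (rule bounded_linear_intro[where K=1])
    apply (transfer, simp)+
    done
  then show ?thesis
    using bounded_linear_compose[OF blinfun.bounded_linear_left] by blast
qed

lemma texp_exp: "texp t E x = blinfun_apply (erep (exp ((ln t) *\<^sub>R Endo E))) x"
proof -
  have "(\<lambda>n. ((ln t) *\<^sub>R Endo E) ^ n /\<^sub>R fact n) sums exp ((ln t) *\<^sub>R Endo E)"
    by (rule exp_converges)
  then have "(\<lambda>n. blinfun_apply (erep (((ln t) *\<^sub>R Endo E) ^ n /\<^sub>R fact n)) x) sums
     blinfun_apply (erep (exp ((ln t) *\<^sub>R Endo E))) x"
    by (rule bounded_linear.sums[OF bl_eval])
  moreover have "blinfun_apply (erep (((ln t) *\<^sub>R Endo E) ^ n /\<^sub>R fact n)) x =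
      ((ln t) ^ n / fact n) *\<^sub>R ((blinfun_apply E ^^ n) x)" for n
  proof -
    have "((ln t) *\<^sub>R Endo E) ^ n /\<^sub>R fact n = ((ln t) ^ n / fact n) *\<^sub>R (Endo E ^ n)"
      by (simp add: scaleR_power divide_inverse_commute)
    then show ?thesis
      by (simp add: erep_scaleR erep_power blinfun.scaleR_left Endo_inverse field_simps)
  qed
  ultimately show ?thesis unfolding texp_def by (simp add: sums_iff)
qed


definition Xp :: "('a::euclidean_space \<Rightarrow>\<^sub>L 'a) \<Rightarrow> real \<Rightarrow> 'a \<Rightarrow> 'a" where
  "Xp E a x = blinfun_apply (erep (exp (a *\<^sub>R Endo E))) x"

lemma texp_scale: "texp t (c *\<^sub>R E) x = Xp E (c * ln t) x"
proof -
  have "Endo (c *\<^sub>R E) = c *\<^sub>R Endo E" by (metis Endo_inverse UNIV_I erep_inverse erep_scaleR)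
  then show ?thesis unfolding texp_exp Xp_def by (simp add: mult.commute)
qed

lemma texp_EX: "texp t E x = Xp E (ln t) x"
  using texp_scale[of t 1 E x] by simp

lemma Xp_add: "Xp E a (Xp E b x) = Xp E (a + b) x"
proof -
  have c: "(a *\<^sub>R Endo E) * (b *\<^sub>R Endo E) = (b *\<^sub>R Endo E) * (a *\<^sub>R Endo E)"
    by simp
  have "exp ((a + b) *\<^sub>R Endo E) = exp (a *\<^sub>R Endo E) * exp (b *\<^sub>R Endo E)"
    using exp_add_commuting[OF c] by (simp add: scaleR_add_left)
  then show ?thesis unfolding Xp_def by (simp add: erep_mult)
qed

lemma Xp_deriv: "((\<lambda>a. Xp E a x) has_vector_derivative Xp E a (blinfun_apply E x)) (at a)"
proof -
  have "((\<lambda>a. blinfun_apply (erep (exp (a *\<^sub>R Endo E))) x) has_vector_derivative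
      blinfun_apply (erep (exp (a *\<^sub>R Endo E) * Endo E)) x) (at a)"
    by (rule bounded_linear.has_vector_derivative[OF bl_eval exp_scaleR_has_vector_derivative_right])
  then show ?thesis unfolding Xp_def by (simp add: erep_mult Endo_inverse)
qed

lemma Xp_bl: "bounded_linear (Xp E a)"
  unfolding Xp_def by (rule blinfun.bounded_linear_right)

lemma onorm_texp: "onorm (texp t E) = norm (erep (exp ((ln t) *\<^sub>R Endo E)))"
proof -
  have "texp t E = blinfun_apply (erep (exp ((ln t) *\<^sub>R Endo E)))"
    by (rule ext) (simp add: texp_exp)
  then show ?thesis by (simp add: norm_blinfun.rep_eq)
qed

lemma norm_texp_le: "norm (texp t E x) \<le> onorm (texp t E) * norm x"
  unfolding onorm_texp by (simp add: texp_exp norm_blinfun)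


lemma rot_alg:
  fixes x y :: "'a::real_vector"
  shows "c *\<^sub>R (a *\<^sub>R x - b *\<^sub>R y) - d *\<^sub>R (b *\<^sub>R x + a *\<^sub>R y) = (a*c - b*d) *\<^sub>R x - (a*d + b*c) *\<^sub>R y"
    and "d *\<^sub>R (a *\<^sub>R x - b *\<^sub>R y) + c *\<^sub>R (b *\<^sub>R x + a *\<^sub>R y) = (a*d + b*c) *\<^sub>R x + (a*c - b*d) *\<^sub>R y"
  by (simp_all add: algebra_simps)

lemma rot_pow:
  assumes Ex: "blinfun_apply E x = Re e *\<^sub>R x - Im e *\<^sub>R y"
    and Ey: "blinfun_apply E y = Im e *\<^sub>R x + Re e *\<^sub>R y"
  shows "(blinfun_apply E ^^ k) x = Re (e^k) *\<^sub>R x - Im (e^k) *\<^sub>R y \<and>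
         (blinfun_apply E ^^ k) y = Im (e^k) *\<^sub>R x + Re (e^k) *\<^sub>R y"
proof (induction k)
  case 0
  then show ?case by simp
next
  case (Suc k)
  have 1: "(blinfun_apply E ^^ Suc k) x = blinfun_apply E ((blinfun_apply E ^^ k) x)" by simp
  have 2: "(blinfun_apply E ^^ Suc k) y = blinfun_apply E ((blinfun_apply E ^^ k) y)" by simp
  have h1: "(blinfun_apply E ^^ k) x = Re (e^k) *\<^sub>R x - Im (e^k) *\<^sub>R y"
    and h2: "(blinfun_apply E ^^ k) y = Im (e^k) *\<^sub>R x + Re (e^k) *\<^sub>R y" using Suc.IH by auto
  have r: "Re (e ^ Suc k) = Re e * Re (e^k) - Im e * Im (e^k)" "Im (e ^ Suc k) = Re e * Im (e^k) + Im e * Re (e^k)"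
    by simp_all
  show ?case
    unfolding 1 2 h1 h2 r
    by (simp only: blinfun.diff_right blinfun.add_right blinfun.scaleR_right Ex Ey rot_alg)
qed

lemma rot_texp:
  assumes Ex: "blinfun_apply E x = Re e *\<^sub>R x - Im e *\<^sub>R y"
    and Ey: "blinfun_apply E y = Im e *\<^sub>R x + Re e *\<^sub>R y"
  shows "texp t E x = Re (exp (of_real (ln t) * e)) *\<^sub>R x - Im (exp (of_real (ln t) * e)) *\<^sub>R y \<and>
         texp t E y = Im (exp (of_real (ln t) * e)) *\<^sub>R x + Re (exp (of_real (ln t) * e)) *\<^sub>R y"
proof -
  let ?z = "of_real (ln t) * e"
  have s: "(\<lambda>n. ?z ^ n /\<^sub>R fact n) sums exp ?z" by (rule exp_converges)
  have "(\<lambda>n. Re (?z ^ n /\<^sub>R fact n)) sums Re (exp ?z) \<and> (\<lambda>n. Im (?z ^ n /\<^sub>R fact n)) sums Im (exp ?z)"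
    by (rule sums_complex_iff[THEN iffD1, OF s])
  then have re: "(\<lambda>n. Re (?z ^ n /\<^sub>R fact n)) sums Re (exp ?z)" and im: "(\<lambda>n. Im (?z ^ n /\<^sub>R fact n)) sums Im (exp ?z)"
    by auto
  have zz: "?z ^ n /\<^sub>R fact n = of_real (ln t ^ n / fact n) * e ^ n" for n
    by (simp add: power_mult_distrib scaleR_conv_of_real divide_inverse mult_ac)
  have rm: "Re (of_real r * w) = r * Re w" "Im (of_real r * w) = r * Im w" for r w by simp_all
  have eqr: "Re (?z ^ n /\<^sub>R fact n) = (ln t ^ n / fact n) * Re (e ^ n)" for n
    unfolding zz by (rule rm(1))
  have eqi: "Im (?z ^ n /\<^sub>R fact n) = (ln t ^ n / fact n) * Im (e ^ n)" for n
    unfolding zz by (rule rm(2))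
  have "(\<lambda>n. (ln t ^ n / fact n) *\<^sub>R ((blinfun_apply E ^^ n) x)) =
        (\<lambda>n. Re (?z ^ n /\<^sub>R fact n) *\<^sub>R x - Im (?z ^ n /\<^sub>R fact n) *\<^sub>R y)"
  proof (rule ext)
    fix n
    have "(blinfun_apply E ^^ n) x = Re (e^n) *\<^sub>R x - Im (e^n) *\<^sub>R y" using rot_pow[OF Ex Ey] by blast
    then show "(ln t ^ n / fact n) *\<^sub>R ((blinfun_apply E ^^ n) x) =
        Re (?z ^ n /\<^sub>R fact n) *\<^sub>R x - Im (?z ^ n /\<^sub>R fact n) *\<^sub>R y"
      unfolding eqr eqi by (simp add: scaleR_diff_right)
  qed
  moreover have "(\<lambda>n. Re (?z ^ n /\<^sub>R fact n) *\<^sub>R x - Im (?z ^ n /\<^sub>R fact n) *\<^sub>R y) sums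
        (Re (exp ?z) *\<^sub>R x - Im (exp ?z) *\<^sub>R y)"
    by (intro sums_diff sums_scaleR_left re im)
  moreover have "(\<lambda>n. (ln t ^ n / fact n) *\<^sub>R ((blinfun_apply E ^^ n) y)) =
        (\<lambda>n. Im (?z ^ n /\<^sub>R fact n) *\<^sub>R x + Re (?z ^ n /\<^sub>R fact n) *\<^sub>R y)"
  proof (rule ext)
    fix n
    have "(blinfun_apply E ^^ n) y = Im (e^n) *\<^sub>R x + Re (e^n) *\<^sub>R y" using rot_pow[OF Ex Ey] by blast
    then show "(ln t ^ n / fact n) *\<^sub>R ((blinfun_apply E ^^ n) y) =
        Im (?z ^ n /\<^sub>R fact n) *\<^sub>R x + Re (?z ^ n /\<^sub>R fact n) *\<^sub>R y"
      unfolding eqr eqi by (simp add: scaleR_add_right)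
  qed
  moreover have "(\<lambda>n. Im (?z ^ n /\<^sub>R fact n) *\<^sub>R x + Re (?z ^ n /\<^sub>R fact n) *\<^sub>R y) sums
        (Im (exp ?z) *\<^sub>R x + Re (exp ?z) *\<^sub>R y)"
    by (intro sums_add sums_scaleR_left re im)
  ultimately show ?thesis unfolding texp_def by (simp add: sums_iff)
qed

lemma norm_rot:
  fixes x y :: "'a::real_inner"
  shows "norm (a *\<^sub>R x - b *\<^sub>R y)^2 + norm (b *\<^sub>R x + a *\<^sub>R y)^2 = (a^2 + b^2) * (norm x^2 + norm y^2)"
  unfolding power2_norm_eq_inner
  by (simp add: inner_diff_left inner_diff_right inner_add_left inner_add_right
      inner_commute[of y x] algebra_simps power2_eq_square)

lemma contracting_no_rot:
  assumes c: "contracting E"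
    and Ex: "blinfun_apply E x = Re e *\<^sub>R x - Im e *\<^sub>R y"
    and Ey: "blinfun_apply E y = Im e *\<^sub>R x + Re e *\<^sub>R y"
    and re: "Re e \<le> 0" and nz: "\<not> (x = 0 \<and> y = 0)"
  shows False
proof -
  have "\<forall>\<^sub>F t in at_right 0. dist (onorm (texp t E)) 0 < 1/2"
    using c unfolding contracting_def by (rule tendstoD) simp
  then have ev: "\<forall>\<^sub>F t in at_right 0. onorm (texp t E) < 1/2"
    by (rule eventually_mono) (simp add: dist_real_def)
  moreover have "\<forall>\<^sub>F t in at_right 0. 0 < t \<and> t < (1::real)"
    by (subst eventually_at_right[of 0 1]) (auto intro!: exI[of _ 1])
  ultimately have "\<forall>\<^sub>F t in at_right 0. onorm (texp t E) < 1/2 \<and> 0 < t \<and> t < (1::real)"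
    by (rule eventually_conj)
  then obtain t where t: "onorm (texp t E) < 1/2" "0 < t" "t < 1"
    using eventually_happens[of _ "at_right (0::real)"] trivial_limit_at_right_real by blast
  let ?z = "of_real (ln t) * e"
  let ?a = "Re (exp ?z)" and ?b = "Im (exp ?z)"
  have "Re ?z \<ge> 0" using re t by (simp add: mult_nonpos_nonpos)
  then have "1 \<le> cmod (exp ?z)" by simp
  then have ab: "1 \<le> ?a^2 + ?b^2" using cmod_power2[of "exp ?z"]
    by (metis one_le_power)
  have np: "0 < norm x^2 + norm y^2" using nz by (auto simp: add_pos_nonneg add_nonneg_pos)
  have "norm x^2 + norm y^2 \<le> (?a^2 + ?b^2) * (norm x^2 + norm y^2)"
    using ab np by simp
  also have "\<dots> = norm (texp t E x)^2 + norm (texp t E y)^2"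
    using rot_texp[OF Ex Ey, of t] norm_rot by metis
  also have "\<dots> \<le> (onorm (texp t E) * norm x)^2 + (onorm (texp t E) * norm y)^2"
    by (intro add_mono power_mono norm_texp_le norm_ge_zero)
  also have "\<dots> = (onorm (texp t E))^2 * (norm x^2 + norm y^2)" by (simp add: algebra_simps power_mult_distrib)
  also have "\<dots> \<le> (1/2)^2 * (norm x^2 + norm y^2)"
    using t np by (intro mult_right_mono power_mono) (auto simp: onorm_texp)
  finally have "norm x^2 + norm y^2 \<le> (1/2)^2 * (norm x^2 + norm y^2)" .
  moreover have "(1/2::real)^2 = 1/4" by (simp add: power2_eq_square)
  ultimately have "norm x^2 + norm y^2 \<le> 1/4 * (norm x^2 + norm y^2)" by simp
  moreover have "\<And>S::real. S \<le> 1/4 * S \<Longrightarrow> 0 < S \<Longrightarrow> False" by linarith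
  ultimately show False using np by blast
qed


lemma chain_Rt:
  assumes "(Rt has_derivative blinfun_apply L) (at (Xp E w \<eta>))"
  shows "((\<lambda>w. Rt (Xp E w \<eta>)) has_real_derivative blinfun_apply L (Xp E w (blinfun_apply E \<eta>))) (at w)"
proof -
  have v: "((\<lambda>w. Xp E w \<eta>) has_derivative (\<lambda>h. h *\<^sub>R Xp E w (blinfun_apply E \<eta>))) (at w)"
    using Xp_deriv[of E \<eta> w] unfolding has_vector_derivative_def .
  have "((Rt \<circ> (\<lambda>w. Xp E w \<eta>)) has_derivative (blinfun_apply L \<circ> (\<lambda>h. h *\<^sub>R Xp E w (blinfun_apply E \<eta>)))) (at w)"
    by (rule diff_chain_at[OF v assms])
  moreover have "(blinfun_apply L \<circ> (\<lambda>h. h *\<^sub>R Xp E w (blinfun_apply E \<eta>))) = (*) (blinfun_apply L (Xp E w (blinfun_apply E \<eta>)))"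
    by (rule ext) (simp add: blinfun.scaleR_right)
  ultimately show ?thesis unfolding has_field_derivative_def by (simp add: o_def)
qed

lemma key:
  fixes E :: "'a::euclidean_space \<Rightarrow>\<^sub>L 'a" and R Rt :: "'a \<Rightarrow> real" and \<eta> :: 'a
    and f' :: "'a \<Rightarrow> ('a \<Rightarrow>\<^sub>L real)" and n :: nat and g :: "real \<Rightarrow> real"
  assumes mu: "0 < \<mu>" and ka: "0 < \<kappa>" and n: "1 \<le> n"
    and R\<eta>: "m \<le> R \<eta>" and m: "0 < m"
    and hom: "\<forall>t>0. \<forall>\<xi>. R (texp t ((1/\<kappa>) *\<^sub>R E) \<xi>) = t * R \<xi>"
    and dRt: "\<forall>x\<in>U. (Rt has_derivative blinfun_apply (f' x)) (at x)"
    and del: "0 < \<delta>"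
    and inU: "\<forall>w. w \<le> ln \<delta> \<longrightarrow> Xp E w \<eta> \<in> U"
    and sub: "\<forall>w. w \<le> ln \<delta> \<longrightarrow> \<bar>Rt (texp (exp (\<kappa> * w)) ((1/\<kappa>) *\<^sub>R E) \<eta>)\<bar> \<le> (m/2) * exp (\<kappa> * w) \<and>
       \<bar>exp (\<kappa> * w) * deriv (\<lambda>s. Rt (texp s ((1/\<kappa>) *\<^sub>R E) \<eta>)) (exp (\<kappa> * w))\<bar> \<le> (m/2) * exp (\<kappa> * w)"
    and gdef: "\<forall>\<theta>. g \<theta> = exp (- real n * R (texp (real n) (- E) (texp \<theta> ((1/\<mu>) *\<^sub>R E) \<eta>))
                - real n * Rt (texp (real n) (- E) (texp \<theta> ((1/\<mu>) *\<^sub>R E) \<eta>)))"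
    and th: "0 < \<theta>\<^sub>1" "\<theta>\<^sub>1 \<le> \<theta>\<^sub>2" "\<theta>\<^sub>2 \<le> (real n * \<delta>) powr \<mu>"
  shows "(\<forall>\<theta>\<in>{\<theta>\<^sub>1..\<theta>\<^sub>2}. texp (real n) (- E) (texp \<theta> ((1/\<mu>) *\<^sub>R E) \<eta>) \<in> U) \<and>
         deriv g absolutely_integrable_on {\<theta>\<^sub>1..\<theta>\<^sub>2} \<and>
         (SUP \<theta>\<in>{\<theta>\<^sub>1..\<theta>\<^sub>2}. \<bar>g \<theta>\<bar>) + integral {\<theta>\<^sub>1..\<theta>\<^sub>2} (\<lambda>\<theta>. \<bar>deriv g \<theta>\<bar>) \<le> 2"
proof -
  define w where "w \<theta> = ln \<theta> / \<mu> - ln (real n)" for \<theta>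
  define h where "h v = Rt (Xp E v \<eta>)" for v
  have npos: "0 < real n" using n by simp
  have P1: "texp (real n) (- E) (texp \<theta> ((1/\<mu>) *\<^sub>R E) \<eta>) = Xp E (w \<theta>) \<eta>" for \<theta>
  proof -
    have "texp (real n) (- E) (texp \<theta> ((1/\<mu>) *\<^sub>R E) \<eta>) = texp (real n) ((-1) *\<^sub>R E) (Xp E (1/\<mu> * ln \<theta>) \<eta>)"
      by (simp add: texp_scale)
    also have "\<dots> = Xp E (-1 * ln (real n)) (Xp E (1/\<mu> * ln \<theta>) \<eta>)" by (rule texp_scale)
    also have "\<dots> = Xp E (w \<theta>) \<eta>" by (simp add: Xp_add w_def)
    finally show ?thesis .
  qed
  have P2: "texp (exp (\<kappa> * v)) ((1/\<kappa>) *\<^sub>R E) \<eta> = Xp E v \<eta>" for v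
    using ka by (simp add: texp_scale)
  have RX: "R (Xp E v \<eta>) = exp (\<kappa> * v) * R \<eta>" for v
  proof -
    have "R (texp (exp (\<kappa> * v)) ((1/\<kappa>) *\<^sub>R E) \<eta>) = exp (\<kappa> * v) * R \<eta>" using hom by simp
    then show ?thesis unfolding P2 .
  qed
  have wle: "w \<theta> \<le> ln \<delta>" if "0 < \<theta>" "\<theta> \<le> \<theta>\<^sub>2" for \<theta>
  proof -
    have "\<theta> \<le> (real n * \<delta>) powr \<mu>" using that th by linarith
    moreover have "0 < (real n * \<delta>) powr \<mu>" using npos del by simp
    ultimately have "ln \<theta> \<le> ln ((real n * \<delta>) powr \<mu>)" using that by (subst ln_le_cancel_iff) auto
    also have "\<dots> = \<mu> * (ln (real n) + ln \<delta>)" using npos del by (simp add: ln_powr ln_mult)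
    finally have "ln \<theta> / \<mu> \<le> ln (real n) + ln \<delta>" using mu by (simp add: divide_le_eq mult.commute)
    then show ?thesis unfolding w_def by simp
  qed
  have hb: "\<bar>h v\<bar> \<le> (m/2) * exp (\<kappa> * v)" if "v \<le> ln \<delta>" for v
    using conjunct1[OF sub[rule_format, OF that]] unfolding P2 h_def .
  define hd where "hd v = blinfun_apply (f' (Xp E v \<eta>)) (Xp E v (blinfun_apply E \<eta>))" for v
  have dh: "(h has_real_derivative hd v) (at v)" if "v \<le> ln \<delta>" for v
    unfolding h_def hd_def using that inU dRt by (intro chain_Rt) blast
  have hdb: "\<bar>hd v\<bar> \<le> \<kappa> * (m/2) * exp (\<kappa> * v)" if v: "v \<le> ln \<delta>" for v
  proof -
    let ?t = "exp (\<kappa> * v)"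
    let ?q = "\<lambda>s. Rt (texp s ((1/\<kappa>) *\<^sub>R E) \<eta>)"
    have tpos: "0 < ?t" by simp
    have dl: "((\<lambda>s. ln s / \<kappa>) has_real_derivative (1 / ?t) / \<kappa>) (at ?t)"
      using tpos ka by (auto intro!: derivative_eq_intros)
    have "((\<lambda>s. h (ln s / \<kappa>)) has_real_derivative hd v * ((1 / ?t) / \<kappa>)) (at ?t)"
    proof -
      have e: "ln ?t / \<kappa> = v" using ka by simp
      have "(h has_real_derivative hd v) (at (ln ?t / \<kappa>))" unfolding e by (rule dh[OF v])
      from DERIV_chain2[OF this dl] show ?thesis .
    qed
    moreover have "h (ln s / \<kappa>) = ?q s" if "s \<in> {0<..}" for s
      using that ka unfolding h_def by (simp add: texp_scale)
    ultimately have "(?q has_real_derivative hd v * ((1 / ?t) / \<kappa>)) (at ?t)"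
      using has_field_derivative_transform_within_open[of "\<lambda>s. h (ln s / \<kappa>)" "hd v * ((1 / ?t) / \<kappa>)" ?t "{0<..}" ?q]
        tpos by simp
    then have "deriv ?q ?t = hd v * ((1 / ?t) / \<kappa>)" by (rule DERIV_imp_deriv)
    then have "\<bar>?t * (hd v * ((1 / ?t) / \<kappa>))\<bar> \<le> (m/2) * ?t"
      using conjunct2[OF sub[rule_format, OF v]] by simp
    then have "\<bar>hd v\<bar> / \<kappa> \<le> (m/2) * ?t" using tpos ka by (simp add: abs_mult abs_divide field_simps)
    then show ?thesis using ka by (simp add: divide_le_eq mult_ac)
  qed
  define \<Phi> where "\<Phi> \<theta> = exp (- (real n * (exp (\<kappa> * w \<theta>) * R \<eta> + h (w \<theta>))))" for \<theta>
  have g\<Phi>: "g \<theta> = \<Phi> \<theta>" for \<theta>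
    unfolding gdef[rule_format] P1 \<Phi>_def RX h_def by (simp add: algebra_simps)
  have gpos: "0 < g \<theta>" for \<theta> unfolding g\<Phi> \<Phi>_def by simp
  have gle1: "g \<theta> \<le> 1" if "0 < \<theta>" "\<theta> \<le> \<theta>\<^sub>2" for \<theta>
  proof -
    have v: "w \<theta> \<le> ln \<delta>" using wle that by blast
    have "m * exp (\<kappa> * w \<theta>) \<le> exp (\<kappa> * w \<theta>) * R \<eta>" using R\<eta> by (simp add: mult.commute)
    then have "0 \<le> exp (\<kappa> * w \<theta>) * R \<eta> + h (w \<theta>)" using hb[OF v] m by linarith
    then have "0 \<le> real n * (exp (\<kappa> * w \<theta>) * R \<eta> + h (w \<theta>))" by simp
    then show ?thesis unfolding g\<Phi> \<Phi>_def by simp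
  qed
  define D where "D \<theta> = \<Phi> \<theta> * (- (real n * (exp (\<kappa> * w \<theta>) * (\<kappa> * (1 / (\<mu> * \<theta>))) * R \<eta>
       + hd (w \<theta>) * (1 / (\<mu> * \<theta>)))))" for \<theta>
  have dg: "(g has_real_derivative D \<theta>) (at \<theta>)" if "0 < \<theta>" "\<theta> \<le> \<theta>\<^sub>2" for \<theta>
  proof -
    have v: "w \<theta> \<le> ln \<delta>" using wle that by blast
    have dw: "(w has_real_derivative 1 / (\<mu> * \<theta>)) (at \<theta>)"
      unfolding w_def using that mu by (auto intro!: derivative_eq_intros simp: field_simps)
    have d1: "((\<lambda>\<theta>. exp (\<kappa> * w \<theta>)) has_real_derivative exp (\<kappa> * w \<theta>) * (\<kappa> * (1 / (\<mu> * \<theta>)))) (at \<theta>)"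
      by (intro DERIV_fun_exp DERIV_cmult dw)
    have d2: "((\<lambda>\<theta>. h (w \<theta>)) has_real_derivative hd (w \<theta>) * (1 / (\<mu> * \<theta>))) (at \<theta>)"
      by (rule DERIV_chain2[OF dh[OF v] dw])
    have dP: "(\<Phi> has_real_derivative D \<theta>) (at \<theta>)"
      unfolding \<Phi>_def D_def
      by (intro DERIV_fun_exp DERIV_minus DERIV_cmult DERIV_add DERIV_cmult_right d1 d2)
    show ?thesis
      by (rule has_field_derivative_transform_within_open[OF dP, of "{0<..}"]) (use that in \<open>auto simp: g\<Phi>\<close>)
  qed
  have Dle: "D \<theta> \<le> 0" if "0 < \<theta>" "\<theta> \<le> \<theta>\<^sub>2" for \<theta>
  proof -
    have v: "w \<theta> \<le> ln \<delta>" using wle that by blast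
    let ?t = "exp (\<kappa> * w \<theta>)"
    have "\<kappa> * (m/2) * ?t \<le> ?t * \<kappa> * R \<eta>"
      using R\<eta> ka m by (simp add: mult_left_mono mult.commute mult.left_commute)
    then have "0 \<le> ?t * \<kappa> * R \<eta> + hd (w \<theta>)" using hdb[OF v] by linarith
    then have "0 \<le> (?t * \<kappa> * R \<eta> + hd (w \<theta>)) * (1 / (\<mu> * \<theta>))" using that mu by simp
    then have "0 \<le> ?t * (\<kappa> * (1 / (\<mu> * \<theta>))) * R \<eta> + hd (w \<theta>) * (1 / (\<mu> * \<theta>))"
      by (simp add: algebra_simps)
    then have "0 \<le> real n * (?t * (\<kappa> * (1 / (\<mu> * \<theta>))) * R \<eta> + hd (w \<theta>) * (1 / (\<mu> * \<theta>)))" by simp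
    moreover have "0 < \<Phi> \<theta>" unfolding \<Phi>_def by simp
    ultimately show ?thesis unfolding D_def by (simp add: mult_nonneg_nonpos)
  qed
  have derivg: "deriv g \<theta> = D \<theta>" if "\<theta> \<in> {\<theta>\<^sub>1..\<theta>\<^sub>2}" for \<theta>
    using that th by (intro DERIV_imp_deriv dg) auto
  have "(D has_integral (g \<theta>\<^sub>2 - g \<theta>\<^sub>1)) {\<theta>\<^sub>1..\<theta>\<^sub>2}"
  proof (rule fundamental_theorem_of_calculus[OF th(2)])
    fix x assume "x \<in> {\<theta>\<^sub>1..\<theta>\<^sub>2}"
    then have "(g has_real_derivative D x) (at x)" using th by (intro dg) auto
    then show "(g has_vector_derivative D x) (at x within {\<theta>\<^sub>1..\<theta>\<^sub>2})"
      by (simp add: has_real_derivative_iff_has_vector_derivative has_vector_derivative_at_within)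
  qed
  then have I1: "(deriv g has_integral (g \<theta>\<^sub>2 - g \<theta>\<^sub>1)) {\<theta>\<^sub>1..\<theta>\<^sub>2}"
    using has_integral_cong[of "{\<theta>\<^sub>1..\<theta>\<^sub>2}" "deriv g" D] derivg by simp
  have "((\<lambda>\<theta>. - D \<theta>) has_integral (g \<theta>\<^sub>1 - g \<theta>\<^sub>2)) {\<theta>\<^sub>1..\<theta>\<^sub>2}"
    using has_integral_neg[OF \<open>(D has_integral (g \<theta>\<^sub>2 - g \<theta>\<^sub>1)) {\<theta>\<^sub>1..\<theta>\<^sub>2}\<close>] by simp
  moreover have "\<bar>deriv g \<theta>\<bar> = - D \<theta>" if "\<theta> \<in> {\<theta>\<^sub>1..\<theta>\<^sub>2}" for \<theta>
    using derivg[OF that] Dle[of \<theta>] that th by auto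
  ultimately have I2: "((\<lambda>\<theta>. \<bar>deriv g \<theta>\<bar>) has_integral (g \<theta>\<^sub>1 - g \<theta>\<^sub>2)) {\<theta>\<^sub>1..\<theta>\<^sub>2}"
    using has_integral_cong[of "{\<theta>\<^sub>1..\<theta>\<^sub>2}" "\<lambda>\<theta>. \<bar>deriv g \<theta>\<bar>" "\<lambda>\<theta>. - D \<theta>"] by simp
  have AI: "deriv g absolutely_integrable_on {\<theta>\<^sub>1..\<theta>\<^sub>2}"
    unfolding absolutely_integrable_on_def using I1 I2 by (auto simp: real_norm_def)
  have SUP: "(SUP \<theta>\<in>{\<theta>\<^sub>1..\<theta>\<^sub>2}. \<bar>g \<theta>\<bar>) \<le> 1"
    using th by (intro cSUP_least) (auto intro!: gle1 simp: abs_of_pos gpos)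
  have "(SUP \<theta>\<in>{\<theta>\<^sub>1..\<theta>\<^sub>2}. \<bar>g \<theta>\<bar>) + integral {\<theta>\<^sub>1..\<theta>\<^sub>2} (\<lambda>\<theta>. \<bar>deriv g \<theta>\<bar>) \<le> 1 + (g \<theta>\<^sub>1 - g \<theta>\<^sub>2)"
    using SUP integral_unique[OF I2] by simp
  also have "\<dots> \<le> 2" using gle1[of \<theta>\<^sub>1] gpos[of \<theta>\<^sub>2] th by simp
  finally have fin: "(SUP \<theta>\<in>{\<theta>\<^sub>1..\<theta>\<^sub>2}. \<bar>g \<theta>\<bar>) + integral {\<theta>\<^sub>1..\<theta>\<^sub>2} (\<lambda>\<theta>. \<bar>deriv g \<theta>\<bar>) \<le> 2" .
  have "\<forall>\<theta>\<in>{\<theta>\<^sub>1..\<theta>\<^sub>2}. texp (real n) (- E) (texp \<theta> ((1/\<mu>) *\<^sub>R E) \<eta>) \<in> U"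
    unfolding P1 using inU wle th by auto
  then show ?thesis using AI fin by blast
qed


lemma trace_similar:
  fixes A B P Q :: "'b::comm_ring_1 mat"
  assumes sim: "similar_mat_wit A B P Q" and A: "A \<in> carrier_mat n n"
  shows "(\<Sum>i<n. A $$ (i,i)) = (\<Sum>i<n. B $$ (i,i))"
proof -
  note D = similar_mat_witD2[OF A sim]
  have P: "P \<in> carrier_mat n n" and B: "B \<in> carrier_mat n n" and Q: "Q \<in> carrier_mat n n"
    using D by auto
  have QP: "\<And>k j. k < n \<Longrightarrow> j < n \<Longrightarrow> (\<Sum>i<n. Q $$ (k,i) * P $$ (i,j)) = (if k = j then 1 else 0)"
  proof -
    fix k j assume "k < n" "j < n"
    then have "(Q * P) $$ (k,j) = (if k = j then 1 else 0)" using D(2) by simp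
    moreover have "(Q * P) $$ (k,j) = (\<Sum>i<n. Q $$ (k,i) * P $$ (i,j))"
      using \<open>k < n\<close> \<open>j < n\<close> P Q by (simp add: scalar_prod_def lessThan_atLeast0)
    ultimately show "(\<Sum>i<n. Q $$ (k,i) * P $$ (i,j)) = (if k = j then 1 else 0)" by simp
  qed
  have "(\<Sum>i<n. A $$ (i,i)) = (\<Sum>i<n. \<Sum>k<n. (\<Sum>j<n. P $$ (i,j) * B $$ (j,k)) * Q $$ (k,i))"
  proof (rule sum.cong[OF refl])
    fix x assume x: "x \<in> {..<n}"
    have PB: "\<And>k. k<n \<Longrightarrow> (P*B)$$(x,k) = (\<Sum>j<n. P$$(x,j)*B$$(j,k))"
      using P B x by (simp add: scalar_prod_def lessThan_atLeast0)
    have "A $$ (x,x) = ((P*B)*Q) $$ (x,x)" using D(3) by simp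
    also have "\<dots> = (\<Sum>k<n. (P*B)$$(x,k) * Q$$(k,x))"
      using P B Q x by (subst index_mult_mat(1)) (auto simp: scalar_prod_def lessThan_atLeast0)
    finally show "A $$ (x,x) = (\<Sum>k<n. (\<Sum>j<n. P $$ (x,j) * B $$ (j,k)) * Q $$ (k,x))"
      using PB by simp
  qed
  also have "\<dots> = (\<Sum>i<n. \<Sum>k<n. \<Sum>j<n. B $$ (j,k) * (Q $$ (k,i) * P $$ (i,j)))"
    by (simp add: sum_distrib_right sum_distrib_left mult_ac)
  also have "\<dots> = (\<Sum>i<n. \<Sum>j<n. \<Sum>k<n. B $$ (j,k) * (Q $$ (k,i) * P $$ (i,j)))"
    by (rule sum.cong[OF refl], rule sum.swap)
  also have "\<dots> = (\<Sum>j<n. \<Sum>i<n. \<Sum>k<n. B $$ (j,k) * (Q $$ (k,i) * P $$ (i,j)))"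
    by (rule sum.swap)
  also have "\<dots> = (\<Sum>j<n. \<Sum>k<n. \<Sum>i<n. B $$ (j,k) * (Q $$ (k,i) * P $$ (i,j)))"
    by (rule sum.cong[OF refl], rule sum.swap)
  also have "\<dots> = (\<Sum>j<n. \<Sum>k<n. B $$ (j,k) * (\<Sum>i<n. Q $$ (k,i) * P $$ (i,j)))"
    by (simp add: sum_distrib_left)
  also have "\<dots> = (\<Sum>j<n. \<Sum>k<n. B $$ (j,k) * (if k = j then 1 else 0))"
    by (intro sum.cong refl, simp add: QP)
  also have "\<dots> = (\<Sum>j<n. B $$ (j,j))"
  proof (rule sum.cong[OF refl])
    fix j assume "j \<in> {..<n}"
    then show "(\<Sum>k<n. B $$ (j,k) * (if k = j then 1 else 0)) = B $$ (j,j)"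
      by (simp add: if_distrib sum.delta' cong: if_cong)
  qed
  finally show ?thesis .
qed


lemma sum_list_Re_pos: "xs \<noteq> [] \<Longrightarrow> (\<forall>x\<in>set xs. 0 < Re x) \<Longrightarrow> 0 < Re (sum_list xs)"
proof (induction xs)
  case Nil then show ?case by simp
next
  case (Cons a xs)
  then show ?case by (cases "xs = []") (auto intro: add_pos_pos)
qed

lemma tr_pos:
  fixes E :: "'a::euclidean_space \<Rightarrow>\<^sub>L 'a"
  assumes c: "contracting E"
  shows "0 < tr E"
proof (rule ccontr)
  assume h: "\<not> 0 < tr E"
  define d where "d = DIM('a)"
  have d0: "0 < d" unfolding d_def by simp
  obtain bb :: "nat \<Rightarrow> 'a" where bij: "bij_betw bb {0..<d} Basis"
    using ex_bij_betw_nat_finite[of "Basis::'a set"] unfolding d_def by auto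
  have bbB: "i < d \<Longrightarrow> bb i \<in> Basis" for i using bij by (auto simp: bij_betw_def)
  have bbinj: "i < d \<Longrightarrow> j < d \<Longrightarrow> bb i = bb j \<longleftrightarrow> i = j" for i j
    using bij by (auto simp: bij_betw_def inj_on_def)
  have bbinner: "i < d \<Longrightarrow> j < d \<Longrightarrow> inner (bb j) (bb i) = (if j = i then 1 else 0)" for i j
    using bbB bbinj inner_Basis by metis
  have coord: "i < d \<Longrightarrow> inner (\<Sum>j<d. cc j *\<^sub>R bb j) (bb i) = cc i" for i and cc :: "nat \<Rightarrow> real"
    by (simp add: inner_sum_left bbinner if_distrib cong: if_cong)
  define A :: "complex mat" where
    "A = Matrix.mat d d (\<lambda>(i,j). complex_of_real (inner (blinfun_apply E (bb j)) (bb i)))"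
  have A: "A \<in> carrier_mat d d" unfolding A_def by simp
  obtain es where cp: "char_poly A = (\<Prod>a\<leftarrow>es. [:- a, 1:])" and les: "length es = d"
    using char_poly_factorized[OF A] by blast
  obtain B P Q where schur: "schur_decomposition A es = (B,P,Q)" by (metis prod_cases3)
  note sd = schur_decomposition[OF A cp schur]
  have B: "B \<in> carrier_mat d d" using similar_mat_witD2[OF A] sd by blast
  have "(\<Sum>i<d. A $$ (i,i)) = (\<Sum>i<d. B $$ (i,i))" using trace_similar sd A by blast
  also have "\<dots> = sum_list es"
  proof -
    have "sum_list es = sum_list (diag_mat B)" using sd by simp
    also have "\<dots> = (\<Sum>i\<in>set [0..<d]. B $$ (i,i))"
      unfolding diag_mat_def using B by (simp add: interv_sum_list_conv_sum_set_nat)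
    finally show ?thesis by (simp add: lessThan_atLeast0)
  qed
  finally have tr1: "(\<Sum>i<d. A $$ (i,i)) = sum_list es" .
  have "(\<Sum>i<d. A $$ (i,i)) = complex_of_real (\<Sum>i<d. inner (blinfun_apply E (bb i)) (bb i))"
    unfolding A_def by simp
  also have "(\<Sum>i<d. inner (blinfun_apply E (bb i)) (bb i)) = tr E"
    unfolding tr_def using sum.reindex_bij_betw[OF bij, of "\<lambda>b. inner (blinfun_apply E b) b"]
    by (simp add: lessThan_atLeast0)
  finally have "Re (sum_list es) = tr E" using tr1 by simp
  then have "\<not> 0 < Re (sum_list es)" using h by simp
  moreover have "es \<noteq> []" using les d0 by auto
  ultimately have "\<not> (\<forall>x\<in>set es. 0 < Re x)" using sum_list_Re_pos by blast
  then obtain e where e0: "e \<in> set es" "\<not> 0 < Re e" by blast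
  then have e: "e \<in> set es" "Re e \<le> 0" by auto
  have "poly (char_poly A) e = 0"
    unfolding cp poly_prod_list using e(1) by (auto simp: prod_list_zero_iff)
  then have "eigenvalue A e" using eigenvalue_root_char_poly[OF A] by simp
  then obtain v where ev: "eigenvector A v e" unfolding eigenvalue_def by blast
  have dA: "dim_row A = d" using A by simp
  have v: "v \<in> carrier_vec d" "v \<noteq> 0\<^sub>v d" "A *\<^sub>v v = e \<cdot>\<^sub>v v"
    using ev unfolding eigenvector_def dA by auto
  define x where "x = (\<Sum>j<d. Re (vec_index v j) *\<^sub>R bb j)"
  define y where "y = (\<Sum>j<d. Im (vec_index v j) *\<^sub>R bb j)"
  have xc: "i < d \<Longrightarrow> inner x (bb i) = Re (vec_index v i)" for i unfolding x_def by (rule coord)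
  have yc: "i < d \<Longrightarrow> inner y (bb i) = Im (vec_index v i)" for i unfolding y_def by (rule coord)
  have Av: "i < d \<Longrightarrow> (\<Sum>j<d. complex_of_real (inner (blinfun_apply E (bb j)) (bb i)) * vec_index v j)
      = e * vec_index v i" for i
  proof -
    assume i: "i < d"
    have "vec_index (A *\<^sub>v v) i = e * vec_index v i" using v i by simp
    moreover have "vec_index (A *\<^sub>v v) i = (\<Sum>j<d. complex_of_real (inner (blinfun_apply E (bb j)) (bb i)) * vec_index v j)"
      using i v(1) unfolding A_def by (simp add: scalar_prod_def lessThan_atLeast0)
    ultimately show ?thesis by simp
  qed
  have Ex: "blinfun_apply E x = Re e *\<^sub>R x - Im e *\<^sub>R y"
  proof (rule euclidean_eqI)
    fix b :: 'a assume "b \<in> Basis"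
    then have "b \<in> bb ` {0..<d}" using bij by (simp add: bij_betw_def)
    then obtain i where i: "i < d" "b = bb i" by auto
    have "inner (blinfun_apply E x) (bb i) = (\<Sum>j<d. Re (vec_index v j) * inner (blinfun_apply E (bb j)) (bb i))"
      unfolding x_def by (simp add: blinfun.sum_right blinfun.scaleR_right inner_sum_left)
    also have "\<dots> = Re (\<Sum>j<d. complex_of_real (inner (blinfun_apply E (bb j)) (bb i)) * vec_index v j)"
      by (simp add: Re_sum mult.commute)
    also have "\<dots> = Re (e * vec_index v i)" using Av i by simp
    also have "\<dots> = inner (Re e *\<^sub>R x - Im e *\<^sub>R y) (bb i)"
      using xc yc i by (simp add: inner_diff_left)
    finally show "inner (blinfun_apply E x) b = inner (Re e *\<^sub>R x - Im e *\<^sub>R y) b" using i by simp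
  qed
  have Ey: "blinfun_apply E y = Im e *\<^sub>R x + Re e *\<^sub>R y"
  proof (rule euclidean_eqI)
    fix b :: 'a assume "b \<in> Basis"
    then have "b \<in> bb ` {0..<d}" using bij by (simp add: bij_betw_def)
    then obtain i where i: "i < d" "b = bb i" by auto
    have "inner (blinfun_apply E y) (bb i) = (\<Sum>j<d. Im (vec_index v j) * inner (blinfun_apply E (bb j)) (bb i))"
      unfolding y_def by (simp add: blinfun.sum_right blinfun.scaleR_right inner_sum_left)
    also have "\<dots> = Im (\<Sum>j<d. complex_of_real (inner (blinfun_apply E (bb j)) (bb i)) * vec_index v j)"
      by (simp add: Im_sum mult.commute)
    also have "\<dots> = Im (e * vec_index v i)" using Av i by simp
    also have "\<dots> = inner (Im e *\<^sub>R x + Re e *\<^sub>R y) (bb i)"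
      using xc yc i by (simp add: inner_add_left mult.commute)
    finally show "inner (blinfun_apply E y) b = inner (Im e *\<^sub>R x + Re e *\<^sub>R y) b" using i by simp
  qed
  have nz: "\<not> (x = 0 \<and> y = 0)"
  proof
    assume xy: "x = 0 \<and> y = 0"
    have "v = 0\<^sub>v d"
    proof (rule eq_vecI)
      fix i assume "i < dim_vec (0\<^sub>v d :: complex vec)"
      then have i: "i < d" by simp
      have "Re (vec_index v i) = 0" "Im (vec_index v i) = 0" using xc[OF i] yc[OF i] xy by simp_all
      then show "vec_index v i = vec_index (0\<^sub>v d) i" using i by (simp add: complex_eq_iff)
    qed (use v in simp)
    then show False using v by simp
  qed
  show False using contracting_no_rot[OF c Ex Ey e(2) nz] .
qed


theorem mainTheorem8:
  fixes S :: "'a::euclidean_space set" and R Rt :: "'a \<Rightarrow> real"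
    and m M \<mu> \<kappa> :: real and U :: "'a set" and E F :: "'a \<Rightarrow>\<^sub>L 'a"
    and g :: "nat \<Rightarrow> 'a \<Rightarrow> real \<Rightarrow> real"
  assumes "compact S" and "0 \<notin> S"
    and "positive_homogeneous R"
    and "0 < m" and "m \<le> M" and "\<forall>\<eta>\<in>S. m \<le> R \<eta> \<and> R \<eta> \<le> M"
    and "open U" and "0 \<in> U" and "C1_on U Rt"
    and "contracting E" and "\<mu> = tr E" and "F = (1 / \<mu>) *\<^sub>R E"
    and "\<And>n \<eta> \<theta>. g n \<eta> \<theta> =
           exp (- real n * R (texp (real n) (- E) (texp \<theta> F \<eta>))
                - real n * Rt (texp (real n) (- E) (texp \<theta> F \<eta>)))"
    and "0 < \<kappa>" and "homogeneous R ((1 / \<kappa>) *\<^sub>R E)"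
    and "strongly_subhomogeneous_1 ((1 / \<kappa>) *\<^sub>R E) Rt"
  shows "\<forall>\<beta>>1. \<exists>\<delta>>0. \<forall>n::nat. n \<ge> 1 \<longrightarrow> (\<forall>\<eta>\<in>S. \<forall>\<theta>\<^sub>1 \<theta>\<^sub>2.
           0 < \<theta>\<^sub>1 \<and> \<theta>\<^sub>1 \<le> \<theta>\<^sub>2 \<and> \<theta>\<^sub>2 \<le> (real n * \<delta>) powr \<mu> \<longrightarrow>
             (\<forall>\<theta>\<in>{\<theta>\<^sub>1..\<theta>\<^sub>2}. texp (real n) (- E) (texp \<theta> F \<eta>) \<in> U) \<and>
             (\<lambda>\<theta>. deriv (g n \<eta>) \<theta>) absolutely_integrable_on {\<theta>\<^sub>1..\<theta>\<^sub>2} \<and>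
             (SUP \<theta>\<in>{\<theta>\<^sub>1..\<theta>\<^sub>2}. \<bar>g n \<eta> \<theta>\<bar>)
               + integral {\<theta>\<^sub>1..\<theta>\<^sub>2} (\<lambda>\<theta>. \<bar>deriv (g n \<eta>) \<theta>\<bar>)
               \<le> 1 + \<beta> * M / m)"
proof (intro allI impI)
  fix \<beta> :: real assume \<beta>: "1 < \<beta>"
  have mu: "0 < \<mu>" using tr_pos[OF assms(10)] assms(11) by simp
  have ka: "0 < \<kappa>" by (rule assms(14))
  have m: "0 < m" by (rule assms(4))
  obtain f' where dRt: "\<forall>x\<in>U. (Rt has_derivative blinfun_apply (f' x)) (at x)"
    using assms(9) unfolding C1_on_def by blast
  have hom: "\<forall>t>0. \<forall>\<xi>. R (texp t ((1/\<kappa>) *\<^sub>R E) \<xi>) = t * R \<xi>"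
    using assms(15) unfolding homogeneous_def by blast
  have "\<exists>\<tau>>0. \<forall>t. 0 < t \<and> t < \<tau> \<longrightarrow> (\<forall>\<xi>\<in>S.
        \<bar>Rt (texp t ((1/\<kappa>) *\<^sub>R E) \<xi>)\<bar> \<le> (m/2) * t \<and>
        \<bar>t * deriv (\<lambda>s. Rt (texp s ((1/\<kappa>) *\<^sub>R E) \<xi>)) t\<bar> \<le> (m/2) * t)"
  proof -
    have ssh: "\<forall>\<epsilon>>0. \<forall>K. compact K \<longrightarrow> (\<exists>\<tau>>0. \<forall>t. 0 < t \<and> t < \<tau> \<longrightarrow> (\<forall>\<xi>\<in>K.
        \<bar>Rt (texp t ((1/\<kappa>) *\<^sub>R E) \<xi>)\<bar> \<le> \<epsilon> * t \<and>
        \<bar>t * deriv (\<lambda>s. Rt (texp s ((1/\<kappa>) *\<^sub>R E) \<xi>)) t\<bar> \<le> \<epsilon> * t))"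
      using assms(16) unfolding strongly_subhomogeneous_1_def by blast
    show ?thesis by (rule ssh[rule_format]) (use m assms(1) in auto)
  qed
  then obtain \<tau> where \<tau>: "0 < \<tau>" "\<forall>t. 0 < t \<and> t < \<tau> \<longrightarrow> (\<forall>\<xi>\<in>S.
        \<bar>Rt (texp t ((1/\<kappa>) *\<^sub>R E) \<xi>)\<bar> \<le> (m/2) * t \<and>
        \<bar>t * deriv (\<lambda>s. Rt (texp s ((1/\<kappa>) *\<^sub>R E) \<xi>)) t\<bar> \<le> (m/2) * t)" by blast
  obtain r where r: "0 < r" "ball 0 r \<subseteq> U" using assms(7,8) open_contains_ball by blast
  obtain B where B: "0 < B" "\<forall>\<eta>\<in>S. norm \<eta> \<le> B"
    using compact_imp_bounded[OF assms(1)] bounded_pos by blast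
  have "\<forall>\<^sub>F s in at_right 0. dist (onorm (texp s E)) 0 < r / B"
    using assms(10) unfolding contracting_def by (rule tendstoD) (simp add: r B)
  then obtain \<delta>0 where \<delta>0: "0 < \<delta>0" "\<forall>s>0. s < \<delta>0 \<longrightarrow> onorm (texp s E) < r / B"
    unfolding eventually_at_right_field by (auto simp: dist_real_def abs_less_iff)
  define \<delta> where "\<delta> = min (\<delta>0/2) ((\<tau>/2) powr (1/\<kappa>))"
  have del: "0 < \<delta>" unfolding \<delta>_def using \<delta>0 \<tau> by simp
  have wsmall: "exp w < \<delta>0 \<and> exp (\<kappa> * w) < \<tau>" if "w \<le> ln \<delta>" for w
  proof
    have "exp w \<le> \<delta>" using that del by (metis exp_le_cancel_iff exp_ln)
    then show "exp w < \<delta>0" unfolding \<delta>_def using \<delta>0 by linarith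
    have "exp (\<kappa> * w) \<le> exp (\<kappa> * ln \<delta>)" using that ka by simp
    also have "\<dots> = \<delta> powr \<kappa>" using del by (simp add: powr_def mult.commute)
    also have "\<dots> \<le> ((\<tau>/2) powr (1/\<kappa>)) powr \<kappa>"
      using del ka by (intro powr_mono2) (auto simp: \<delta>_def)
    also have "\<dots> = \<tau>/2" using ka \<tau> by (simp add: powr_powr)
    finally show "exp (\<kappa> * w) < \<tau>" using \<tau> by linarith
  qed
  have fin2: "2 \<le> 1 + \<beta> * M / m"
  proof -
    have "1 \<le> M / m" using assms(4,5) by simp
    then have "\<beta> * 1 \<le> \<beta> * (M / m)" using \<beta> by (intro mult_left_mono) auto
    then show ?thesis using \<beta> by simp
  qed
  show "\<exists>\<delta>>0. \<forall>n::nat. n \<ge> 1 \<longrightarrow> (\<forall>\<eta>\<in>S. \<forall>\<theta>\<^sub>1 \<theta>\<^sub>2.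
           0 < \<theta>\<^sub>1 \<and> \<theta>\<^sub>1 \<le> \<theta>\<^sub>2 \<and> \<theta>\<^sub>2 \<le> (real n * \<delta>) powr \<mu> \<longrightarrow>
             (\<forall>\<theta>\<in>{\<theta>\<^sub>1..\<theta>\<^sub>2}. texp (real n) (- E) (texp \<theta> F \<eta>) \<in> U) \<and>
             (\<lambda>\<theta>. deriv (g n \<eta>) \<theta>) absolutely_integrable_on {\<theta>\<^sub>1..\<theta>\<^sub>2} \<and>
             (SUP \<theta>\<in>{\<theta>\<^sub>1..\<theta>\<^sub>2}. \<bar>g n \<eta> \<theta>\<bar>)
               + integral {\<theta>\<^sub>1..\<theta>\<^sub>2} (\<lambda>\<theta>. \<bar>deriv (g n \<eta>) \<theta>\<bar>)
               \<le> 1 + \<beta> * M / m)"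
  proof (intro exI[of _ \<delta>] conjI del allI impI ballI)
    fix n :: nat and \<eta> \<theta>\<^sub>1 \<theta>\<^sub>2
    assume n: "1 \<le> n" and \<eta>: "\<eta> \<in> S"
      and th: "0 < \<theta>\<^sub>1 \<and> \<theta>\<^sub>1 \<le> \<theta>\<^sub>2 \<and> \<theta>\<^sub>2 \<le> (real n * \<delta>) powr \<mu>"
    have R\<eta>: "m \<le> R \<eta>" using assms(6) \<eta> by blast
    have \<eta>0: "0 < norm \<eta>" using assms(2) \<eta> by auto
    have inU: "\<forall>w. w \<le> ln \<delta> \<longrightarrow> Xp E w \<eta> \<in> U"
    proof (intro allI impI)
      fix w assume w: "w \<le> ln \<delta>"
      have eq: "Xp E w \<eta> = texp (exp w) E \<eta>" by (simp add: texp_EX)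
      have "norm (texp (exp w) E \<eta>) \<le> onorm (texp (exp w) E) * norm \<eta>" by (rule norm_texp_le)
      also have "\<dots> < (r / B) * norm \<eta>"
        using \<delta>0(2) wsmall[OF w] \<eta>0 by (intro mult_strict_right_mono) auto
      also have "\<dots> \<le> (r / B) * B" using B \<eta> r by (intro mult_left_mono) auto
      also have "\<dots> = r" using B by simp
      finally have "Xp E w \<eta> \<in> ball 0 r" unfolding eq by simp
      then show "Xp E w \<eta> \<in> U" using r by blast
    qed
    have sub: "\<forall>w. w \<le> ln \<delta> \<longrightarrow> \<bar>Rt (texp (exp (\<kappa> * w)) ((1/\<kappa>) *\<^sub>R E) \<eta>)\<bar> \<le> (m/2) * exp (\<kappa> * w) \<and>
       \<bar>exp (\<kappa> * w) * deriv (\<lambda>s. Rt (texp s ((1/\<kappa>) *\<^sub>R E) \<eta>)) (exp (\<kappa> * w))\<bar> \<le> (m/2) * exp (\<kappa> * w)"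
      using \<tau>(2) wsmall \<eta> by simp
    have gdef: "\<forall>\<theta>. g n \<eta> \<theta> = exp (- real n * R (texp (real n) (- E) (texp \<theta> ((1/\<mu>) *\<^sub>R E) \<eta>))
                - real n * Rt (texp (real n) (- E) (texp \<theta> ((1/\<mu>) *\<^sub>R E) \<eta>)))"
      using assms(13) assms(12) by simp
    have K: "(\<forall>\<theta>\<in>{\<theta>\<^sub>1..\<theta>\<^sub>2}. texp (real n) (- E) (texp \<theta> ((1/\<mu>) *\<^sub>R E) \<eta>) \<in> U) \<and>
         deriv (g n \<eta>) absolutely_integrable_on {\<theta>\<^sub>1..\<theta>\<^sub>2} \<and>
         (SUP \<theta>\<in>{\<theta>\<^sub>1..\<theta>\<^sub>2}. \<bar>g n \<eta> \<theta>\<bar>) + integral {\<theta>\<^sub>1..\<theta>\<^sub>2} (\<lambda>\<theta>. \<bar>deriv (g n \<eta>) \<theta>\<bar>) \<le> 2"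
      using th by (intro key[OF mu ka n R\<eta> m hom dRt del inU sub gdef]) auto
    show "texp (real n) (- E) (texp \<theta> F \<eta>) \<in> U" if "\<theta> \<in> {\<theta>\<^sub>1..\<theta>\<^sub>2}" for \<theta>
      using K assms(12) that by simp
    show "(\<lambda>\<theta>. deriv (g n \<eta>) \<theta>) absolutely_integrable_on {\<theta>\<^sub>1..\<theta>\<^sub>2}"
      using K by simp
    show "(SUP \<theta>\<in>{\<theta>\<^sub>1..\<theta>\<^sub>2}. \<bar>g n \<eta> \<theta>\<bar>) + integral {\<theta>\<^sub>1..\<theta>\<^sub>2} (\<lambda>\<theta>. \<bar>deriv (g n \<eta>) \<theta>\<bar>) \<le> 1 + \<beta> * M / m"
      using K fin2 by linarith
  qed
qed


end
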